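(* Let $G$ be a planar triangulation on $n$ vertices with no separating triangle, with a fixed planar embedding. Let $H$ be the planar triangulation obtained from $G$ by adding, for each facial triangle $t$ of $G$, a new vertex $v_t$ adjacent to the three vertices of $t$. Then $\nu(H)\leq 2n-4$.
   Context: A planar triangulation is a maximal planar simple graph; in any planar embedding all its faces are bounded by triangles, called facial triangles. A separating triangle of $G$ is a triangle whose vertex set, when removed, disconnects $G$ (equivalently, in the embedding, a triangle with vertices both inside and outside it). $\nu(H)$ is the maximum number of pairwise edge-disjoint triangles in $H$. *)

theory Defs
  imports Main
begin

definition simple_graph :: "'a set \<Rightarrow> 'a set set \<Rightarrow> bool" where
  "simple_graph V E \<longleftrightarrow> finite V \<and> (\<forall>e\<in>E. e \<subseteq> V \<and> card e = 2)"

definition adj_rel :: "'a set set \<Rightarrow> ('a \<times> 'a) set" where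
  "adj_rel E = {(x, y). {x, y} \<in> E}"

definition graph_connected :: "'a set \<Rightarrow> 'a set set \<Rightarrow> bool" where
  "graph_connected V E \<longleftrightarrow> (\<forall>x\<in>V. \<forall>y\<in>V. (x, y) \<in> (adj_rel E)\<^sup>*)"

definition triangles :: "'a set \<Rightarrow> 'a set set \<Rightarrow> 'a set set" where
  "triangles V E = {T. T \<subseteq> V \<and> card T = 3 \<and> (\<forall>u\<in>T. \<forall>w\<in>T. u \<noteq> w \<longrightarrow> {u, w} \<in> E)}"

definition delete_verts :: "'a set set \<Rightarrow> 'a set \<Rightarrow> 'a set set" where
  "delete_verts E S = {e \<in> E. e \<inter> S = {}}"

definition separating_triangle :: "'a set \<Rightarrow> 'a set set \<Rightarrow> 'a set \<Rightarrow> bool" where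
  "separating_triangle V E T \<longleftrightarrow>
     T \<in> triangles V E \<and> \<not> graph_connected (V - T) (delete_verts E T)"

text \<open>A plane triangulation, i.e. a planar triangulation with a fixed planar embedding,
  described combinatorially by its faces: a finite index set F of faces, each face f
  bounded by the triangle fv f, such that gluing the faces along the edges yields a
  triangulated 2-sphere (every edge lies on exactly two faces, the faces around every
  vertex form a single cycle, the graph is connected, and Euler's formula
  |V| - |E| + |F| = 2 holds).\<close>

definition faces_at :: "'f set \<Rightarrow> ('f \<Rightarrow> 'a set) \<Rightarrow> 'a \<Rightarrow> 'f set" where
  "faces_at F fv x = {f \<in> F. x \<in> fv f}"

definition face_adj_at :: "'f set \<Rightarrow> ('f \<Rightarrow> 'a set) \<Rightarrow> 'a \<Rightarrow> ('f \<times> 'f) set" where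
  "face_adj_at F fv x = {(f, g). f \<in> faces_at F fv x \<and> g \<in> faces_at F fv x \<and> f \<noteq> g \<and>
                                  (\<exists>y. y \<noteq> x \<and> y \<in> fv f \<and> y \<in> fv g)}"

definition plane_triangulation ::
  "'a set \<Rightarrow> 'a set set \<Rightarrow> 'f set \<Rightarrow> ('f \<Rightarrow> 'a set) \<Rightarrow> bool" where
  "plane_triangulation V E F fv \<longleftrightarrow>
     simple_graph V E \<and> graph_connected V E \<and> finite F \<and>
     (\<forall>f\<in>F. fv f \<in> triangles V E) \<and>
     (\<forall>e\<in>E. card {f \<in> F. e \<subseteq> fv f} = 2) \<and>
     (\<forall>x\<in>V. \<forall>f\<in>faces_at F fv x. \<forall>g\<in>faces_at F fv x. (f, g) \<in> (face_adj_at F fv x)\<^sup>*) \<and>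
     int (card V) - int (card E) + int (card F) = 2"

text \<open>The graph H: add a new vertex v_t (= Inr t) for every face t, adjacent to the
  three vertices of t.\<close>

definition stack_verts :: "'a set \<Rightarrow> 'f set \<Rightarrow> ('a + 'f) set" where
  "stack_verts V F = Inl ` V \<union> Inr ` F"

definition stack_edges :: "'a set set \<Rightarrow> 'f set \<Rightarrow> ('f \<Rightarrow> 'a set) \<Rightarrow> ('a + 'f) set set" where
  "stack_edges E F fv = (\<lambda>e. Inl ` e) ` E \<union> {{Inl x, Inr f} | x f. f \<in> F \<and> x \<in> fv f}"

definition edge_disjoint_triangles :: "'a set \<Rightarrow> 'a set set \<Rightarrow> 'a set set \<Rightarrow> bool" where
  "edge_disjoint_triangles V E S \<longleftrightarrow> S \<subseteq> triangles V E \<and>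
     (\<forall>T1\<in>S. \<forall>T2\<in>S. T1 \<noteq> T2 \<longrightarrow> card (T1 \<inter> T2) \<le> 1)"

definition nu :: "'a set \<Rightarrow> 'a set set \<Rightarrow> nat" where
  "nu V E = Max {card S | S. edge_disjoint_triangles V E S}"

end

theory Submission
  imports Defs
begin

definition adjI :: "'i set \<Rightarrow> ('i \<Rightarrow> 'n set) \<Rightarrow> ('n \<times> 'n) set" where
  "adjI I ends = {(x,y). \<exists>i\<in>I. x \<in> ends i \<and> y \<in> ends i}"

definition connI :: "'n set \<Rightarrow> 'i set \<Rightarrow> ('i \<Rightarrow> 'n set) \<Rightarrow> bool" where
  "connI N I ends \<longleftrightarrow> (\<forall>x\<in>N. \<forall>y\<in>N. (x,y) \<in> (adjI I ends)\<^sup>*)"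

lemma adjI_intro: "i \<in> I \<Longrightarrow> x \<in> ends i \<Longrightarrow> y \<in> ends i \<Longrightarrow> (x,y) \<in> adjI I ends"
  unfolding adjI_def by blast

lemma adjI_mono: "I \<subseteq> J \<Longrightarrow> adjI I ends \<subseteq> adjI J ends"
  unfolding adjI_def by blast

lemma three_le_card:
  assumes "finite S" "a \<in> S" "b \<in> S" "c \<in> S" "a \<noteq> b" "b \<noteq> c" "a \<noteq> c"
  shows "3 \<le> card S"
proof -
  have "card {a,b,c} = 3" using assms by simp
  moreover have "card {a,b,c} \<le> card S" using assms by (intro card_mono) auto
  ultimately show ?thesis by simp
qed

lemma conn_card:
  assumes finN: "finite N" and finI: "finite I"
    and ends: "\<And>i. i \<in> I \<Longrightarrow> finite (ends i) \<and> card (ends i) \<le> 2"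
    and conn: "connI N I ends"
  shows "card N \<le> card I + 1"
proof (cases "N = {}")
  case True then show ?thesis by simp
next
  case False
  then obtain r where r: "r \<in> N" by blast
  define R where "R = adjI I ends"
  define dist where "dist x = (LEAST n. (x,r) \<in> R^^n)" for x
  have key: "\<exists>i\<in>I. x \<in> ends i \<and> (\<exists>y\<in>ends i. dist y < dist x)" if x: "x \<in> N" "x \<noteq> r" for x
  proof -
    have "(x,r) \<in> R\<^sup>*" using conn x r unfolding connI_def R_def by blast
    then obtain n where "(x,r) \<in> R^^n" using rtrancl_power by blast
    then have dx: "(x,r) \<in> R^^(dist x)" unfolding dist_def by (rule LeastI)
    have "dist x \<noteq> 0"
    proof
      assume "dist x = 0"
      then show False using dx x by simp
    qed
    then obtain m where m: "dist x = Suc m" by (cases "dist x") auto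
    then have "(x,r) \<in> R^^(Suc m)" using dx by simp
    then obtain y where xy: "(x,y) \<in> R" and yr: "(y,r) \<in> R^^m" by (rule relpow_Suc_E2)
    have "dist y \<le> m" unfolding dist_def using yr by (rule Least_le)
    then have "dist y < dist x" using m by simp
    moreover from xy obtain i where "i \<in> I" "x \<in> ends i" "y \<in> ends i" unfolding R_def adjI_def by blast
    ultimately show ?thesis by blast
  qed
  define phi where "phi x = (SOME i. i \<in> I \<and> x \<in> ends i \<and> (\<exists>y\<in>ends i. dist y < dist x))" for x
  have phi: "phi x \<in> I \<and> x \<in> ends (phi x) \<and> (\<exists>y\<in>ends (phi x). dist y < dist x)" if "x \<in> N - {r}" for x
  proof -
    have "\<exists>i. i \<in> I \<and> x \<in> ends i \<and> (\<exists>y\<in>ends i. dist y < dist x)" using key[of x] that by blast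
    then show ?thesis unfolding phi_def by (rule someI_ex)
  qed
  have inj: "inj_on phi (N - {r})"
  proof (rule inj_onI, rule ccontr)
    fix x x' assume xN: "x \<in> N - {r}" and x'N: "x' \<in> N - {r}" and eq: "phi x = phi x'" and ne: "x \<noteq> x'"
    define i where "i = phi x"
    obtain y where y: "y \<in> ends i" "dist y < dist x" "x \<in> ends i" "i \<in> I" using phi[OF xN] i_def by blast
    obtain y' where y': "y' \<in> ends i" "dist y' < dist x'" "x' \<in> ends i" using phi[OF x'N] eq i_def by auto
    have yx: "y \<noteq> x" "y' \<noteq> x'" using y y' by auto
    have c: "finite (ends i)" "card (ends i) \<le> 2" using ends y(4) by auto
    have "x' = y"
    proof (rule ccontr)
      assume "x' \<noteq> y"
      then have "3 \<le> card (ends i)" using three_le_card[OF c(1) y(3) y(1) y'(3)] yx ne by auto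
      then show False using c by simp
    qed
    have "y' = x"
    proof (rule ccontr)
      assume "y' \<noteq> x"
      then have "3 \<le> card (ends i)" using three_le_card[OF c(1) y'(3) y'(1) y(3)] yx ne by auto
      then show False using c by simp
    qed
    show False using y y' \<open>x' = y\<close> \<open>y' = x\<close> by simp
  qed
  have "phi ` (N - {r}) \<subseteq> I" using phi by auto
  then have "card (N - {r}) \<le> card I" using card_inj_on_le[OF inj _ finI] by simp
  then show ?thesis using r finN by simp
qed

lemma double_count:
  assumes "finite A" "finite B"
  shows "(\<Sum>a\<in>A. card {b\<in>B. P a b}) = (\<Sum>b\<in>B. card {a\<in>A. P a b})"
proof -
  have 1: "card {b\<in>B. P a b} = (\<Sum>b\<in>B. if P a b then 1 else 0)" for a
    using assms by (simp add: sum.If_cases Int_def conj_commute)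
  have 2: "card {a\<in>A. P a b} = (\<Sum>a\<in>A. if P a b then 1 else 0)" for b
    using assms by (simp add: sum.If_cases Int_def conj_commute)
  show ?thesis unfolding 1 2 by (rule sum.swap)
qed


lemma handshake:
  assumes finN: "finite N" and finI: "finite I"
    and ends: "\<And>i. i \<in> I \<Longrightarrow> ends i \<subseteq> N \<and> card (ends i) = 2"
    and ev: "\<And>x. x \<in> N \<Longrightarrow> even (card {i\<in>I. x \<in> ends i})"
    and i0: "i0 \<in> I" "ends i0 = {a,b}" "a \<noteq> b"
  shows "(a,b) \<in> (adjI (I - {i0}) ends)\<^sup>*"
proof (rule ccontr)
  assume nab: "(a,b) \<notin> (adjI (I - {i0}) ends)\<^sup>*"
  define I' where "I' = I - {i0}"
  define R where "R = adjI I' ends"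
  define C where "C = {x\<in>N. (a,x) \<in> R\<^sup>*}"
  have finC: "finite C" using finN C_def by simp
  have aC: "a \<in> C" using ends[OF i0(1)] i0 C_def by auto
  have bC: "b \<notin> C" using nab C_def R_def I'_def by auto
  have finI': "finite I'" using finI I'_def by simp
  have closed: "ends i \<subseteq> C" if "i \<in> I'" "x \<in> ends i" "x \<in> C" for i x
  proof
    fix y assume y: "y \<in> ends i"
    have "(x,y) \<in> R" using that y unfolding R_def adjI_def by blast
    moreover have "(a,x) \<in> R\<^sup>*" using that C_def by simp
    ultimately have "(a,y) \<in> R\<^sup>*" by simp
    moreover have "y \<in> N" using ends that y I'_def by auto
    ultimately show "y \<in> C" using C_def by simp
  qed
  have evi: "even (card {x\<in>C. x \<in> ends i})" if "i \<in> I'" for i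
  proof (cases "ends i \<inter> C = {}")
    case True
    have e: "{x\<in>C. x \<in> ends i} = {}" using True by auto
    show ?thesis unfolding e by simp
  next
    case False
    then have "{x\<in>C. x \<in> ends i} = ends i" using closed[OF that] by blast
    then show ?thesis using ends that I'_def by simp
  qed
  have dc: "(\<Sum>x\<in>C. card {i\<in>I'. x \<in> ends i}) = (\<Sum>i\<in>I'. card {x\<in>C. x \<in> ends i})"
    by (rule double_count[OF finC finI'])
  have per: "card {i\<in>I. x \<in> ends i} = card {i\<in>I'. x \<in> ends i} + (if x = a then 1 else 0)" if "x \<in> C" for x
  proof (cases "x = a")
    case True
    then have "{i\<in>I. x \<in> ends i} = insert i0 {i\<in>I'. x \<in> ends i}" using i0 I'_def by auto
    moreover have "i0 \<notin> {i\<in>I'. x \<in> ends i}" using I'_def by simp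
    ultimately show ?thesis using True finI' by simp
  next
    case False
    then have "x \<notin> ends i0" using i0 that bC by auto
    then have "{i\<in>I. x \<in> ends i} = {i\<in>I'. x \<in> ends i}" using I'_def by auto
    then show ?thesis using False by simp
  qed
  have "(\<Sum>x\<in>C. card {i\<in>I. x \<in> ends i}) = (\<Sum>x\<in>C. card {i\<in>I'. x \<in> ends i} + (if x = a then 1 else 0))"
    using per by (rule sum.cong[OF refl])
  also have "\<dots> = (\<Sum>x\<in>C. card {i\<in>I'. x \<in> ends i}) + 1"
    using aC finC by (simp add: sum.distrib)
  finally have eq: "(\<Sum>x\<in>C. card {i\<in>I. x \<in> ends i}) = (\<Sum>x\<in>C. card {i\<in>I'. x \<in> ends i}) + 1" .
  have "even (\<Sum>x\<in>C. card {i\<in>I. x \<in> ends i})" using ev C_def by (intro dvd_sum) auto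
  moreover have "even (\<Sum>x\<in>C. card {i\<in>I'. x \<in> ends i})" unfolding dc using evi by (intro dvd_sum) auto
  ultimately show False using eq by simp
qed

lemma pt_facts:
  assumes "plane_triangulation V E F fv"
  shows "finite V" "finite E" "finite F" "\<And>e. e \<in> E \<Longrightarrow> e \<subseteq> V \<and> card e = 2"
    "\<And>f. f \<in> F \<Longrightarrow> fv f \<in> triangles V E"
    "\<And>e. e \<in> E \<Longrightarrow> card {f\<in>F. e \<subseteq> fv f} = 2"
    "graph_connected V E"
    "\<And>x f g. x \<in> V \<Longrightarrow> f \<in> faces_at F fv x \<Longrightarrow> g \<in> faces_at F fv x \<Longrightarrow> (f,g) \<in> (face_adj_at F fv x)\<^sup>*"
    "int (card V) - int (card E) + int (card F) = 2"
  using assms unfolding plane_triangulation_def simple_graph_def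
  by (auto intro: finite_subset[of E "Pow V"])

lemma tri_edges:
  assumes "simple_graph V E" "t \<in> triangles V E"
  obtains p q r where "t = {p,q,r}" "p \<noteq> q" "q \<noteq> r" "p \<noteq> r"
    "{e\<in>E. e \<subseteq> t} = {{p,q},{q,r},{p,r}}"
proof -
  have "card t = 3" using assms triangles_def by auto
  then obtain p q r where t: "t = {p,q,r}" "p \<noteq> q" "q \<noteq> r" "p \<noteq> r" by (auto simp: card_3_iff)
  have "{e\<in>E. e \<subseteq> t} = {{p,q},{q,r},{p,r}}"
  proof
    show "{e\<in>E. e \<subseteq> t} \<subseteq> {{p,q},{q,r},{p,r}}"
    proof
      fix e assume e: "e \<in> {e\<in>E. e \<subseteq> t}"
      then have "card e = 2" using assms(1) simple_graph_def by auto
      then obtain x y where "e = {x,y}" "x \<noteq> y" by (auto simp: card_2_iff)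
      then show "e \<in> {{p,q},{q,r},{p,r}}" using e t by auto
    qed
  next
    show "{{p,q},{q,r},{p,r}} \<subseteq> {e\<in>E. e \<subseteq> t}" using assms(2) t unfolding triangles_def by auto
  qed
  then show ?thesis using that t by blast
qed

lemma filt_insert: "{e\<in>insert a S. P e} = (if P a then insert a {e\<in>S. P e} else {e\<in>S. P e})"
  by auto

lemma parity3:
  assumes "p \<noteq> q" "q \<noteq> r" "p \<noteq> r"
  shows "even (card {e \<in> {{p,q},{q,r},{p,r}}. \<exists>x\<in>e. \<exists>y\<in>e. x \<in> A \<and> y \<notin> A})"
proof -
  have d: "{p,q} \<noteq> {q,r}" "{p,q} \<noteq> {p,r}" "{q,r} \<noteq> {p,r}" using assms by (auto simp: doubleton_eq_iff)
  show ?thesis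
    using assms d
    by (cases "p \<in> A"; cases "q \<in> A"; cases "r \<in> A") (simp_all only: filt_insert, auto simp: doubleton_eq_iff)
qed


lemma no_nonsep_cycle:
  assumes pt: "plane_triangulation V E F fv"
    and abc: "a \<noteq> b" "b \<noteq> c" "a \<noteq> c" "{a,b} \<in> E" "{b,c} \<in> E" "{a,c} \<in> E"
    and conn: "connI F (E - {{a,b},{b,c},{a,c}}) (\<lambda>e. {f\<in>F. e \<subseteq> fv f})"
  shows False
proof -
  define X where "X = {{a,b},{b,c},{a,c}}"
  define ends where "ends = (\<lambda>e. {f\<in>F. e \<subseteq> fv f})"
  note facts = pt_facts[OF pt]
  have "\<exists>D. (D \<subseteq> E - X \<and> connI F D ends) \<and> (\<forall>D'. D' \<subseteq> E - X \<and> connI F D' ends \<longrightarrow> card D \<le> card D')"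
    by (rule ex_has_least_nat[where P="\<lambda>D. D \<subseteq> E - X \<and> connI F D ends" and k="E - X" and m=card])
      (use conn in \<open>simp add: X_def ends_def\<close>)
  then obtain D where D: "D \<subseteq> E - X" "connI F D ends"
    and Dmin0: "\<forall>D'. D' \<subseteq> E - X \<and> connI F D' ends \<longrightarrow> card D \<le> card D'" by (elim exE conjE)
  have Dmin: "card D \<le> card D'" if "D' \<subseteq> E - X" "connI F D' ends" for D'
    using Dmin0 that by simp
  define K where "K = E - D"
  have finE: "finite E" using facts(2) .
  have finD: "finite D" using D finE finite_subset by blast
  have XK: "X \<subseteq> K" using D K_def X_def abc by auto
  have Kconn: "connI V K (\<lambda>e. e)"
  proof (rule ccontr)
    assume "\<not> connI V K (\<lambda>e. e)"
    then obtain u v where uv: "u \<in> V" "v \<in> V" "(u,v) \<notin> (adjI K (\<lambda>e. e))\<^sup>*" unfolding connI_def by blast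
    define A where "A = {w\<in>V. (u,w) \<in> (adjI K (\<lambda>e. e))\<^sup>*}"
    define Y where "Y = {e\<in>E. \<exists>p\<in>e. \<exists>q\<in>e. p \<in> A \<and> q \<notin> A}"
    have YD: "Y \<subseteq> D"
    proof
      fix e assume e: "e \<in> Y"
      show "e \<in> D"
      proof (rule ccontr)
        assume "e \<notin> D"
        then have eK: "e \<in> K" using e Y_def K_def by auto
        obtain p q where pq: "p \<in> e" "q \<in> e" "p \<in> A" "q \<notin> A" using e Y_def by auto
        have "(p,q) \<in> adjI K (\<lambda>e. e)" using eK pq adjI_def by auto
        moreover have "(u,p) \<in> (adjI K (\<lambda>e. e))\<^sup>*" using pq A_def by auto
        ultimately have "(u,q) \<in> (adjI K (\<lambda>e. e))\<^sup>*" by simp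
        moreover have "q \<in> V" using facts(4) e Y_def pq by auto
        ultimately show False using pq A_def by auto
      qed
    qed
    have Yne: "Y \<noteq> {}"
    proof -
      have path: "(u,v) \<in> (adj_rel E)\<^sup>*" using facts(7) uv unfolding graph_connected_def by blast
      have gen: "Y \<noteq> {}" if "(u,z) \<in> (adj_rel E)\<^sup>*" "z \<notin> A" for z
        using that
      proof (induction rule: rtrancl_induct)
        case base then show ?case using uv A_def by auto
      next
        case (step y z)
        show ?case
        proof (cases "y \<in> A")
          case True
          have "{y,z} \<in> E" using step(2) unfolding adj_rel_def by simp
          then have "{y,z} \<in> Y" using step True Y_def by auto
          then show ?thesis by auto
        next
          case False then show ?thesis using step.IH by simp
        qed
      qed
      moreover have "v \<notin> A" using uv A_def by simp
      ultimately show ?thesis using path by blast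
    qed
    then obtain e where eY: "e \<in> Y" by blast
    have eE: "e \<in> E" using eY Y_def by simp
    have "card (ends e) = 2" using facts(6) eE ends_def by simp
    then obtain f1 f2 where f12: "ends e = {f1,f2}" "f1 \<noteq> f2" by (meson card_2_iff)
    have evY: "even (card {i\<in>Y. f \<in> ends i})" if f: "f \<in> F" for f
    proof -
      have sg: "simple_graph V E" using pt plane_triangulation_def by blast
      obtain p q r where pqr: "fv f = {p,q,r}" "p \<noteq> q" "q \<noteq> r" "p \<noteq> r"
        "{e\<in>E. e \<subseteq> fv f} = {{p,q},{q,r},{p,r}}"
        using tri_edges[OF sg facts(5)[OF f]] by blast
      have "{i\<in>Y. f \<in> ends i} = {i\<in>{e\<in>E. e \<subseteq> fv f}. \<exists>x\<in>i. \<exists>y\<in>i. x \<in> A \<and> y \<notin> A}"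
        unfolding Y_def ends_def using f by auto
      also have "\<dots> = {e \<in> {{p,q},{q,r},{p,r}}. \<exists>x\<in>e. \<exists>y\<in>e. x \<in> A \<and> y \<notin> A}"
        unfolding pqr(5) ..
      finally have "{i\<in>Y. f \<in> ends i} = {e \<in> {{p,q},{q,r},{p,r}}. \<exists>x\<in>e. \<exists>y\<in>e. x \<in> A \<and> y \<notin> A}" .
      then show ?thesis using parity3[OF pqr(2-4)] by simp
    qed
    have finF: "finite F" using facts(3) .
    have finY: "finite Y" using YD finD finite_subset by blast
    have endsY: "ends i \<subseteq> F \<and> card (ends i) = 2" if "i \<in> Y" for i
      using that facts(6) Y_def ends_def by auto
    have hs1: "(f1,f2) \<in> (adjI (Y - {e}) ends)\<^sup>*"
      by (rule handshake[OF finF finY endsY evY eY f12(1) f12(2)])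
    have f21: "ends e = {f2,f1}" using f12 by auto
    have hs2: "(f2,f1) \<in> (adjI (Y - {e}) ends)\<^sup>*"
      by (rule handshake[OF finF finY endsY evY eY f21 f12(2)[symmetric]])
    have mono: "(adjI (Y - {e}) ends)\<^sup>* \<subseteq> (adjI (D - {e}) ends)\<^sup>*"
      using YD by (intro rtrancl_mono adjI_mono) auto
    have sub: "adjI D ends \<subseteq> (adjI (D - {e}) ends)\<^sup>*"
    proof
      fix p assume "p \<in> adjI D ends"
      then obtain x y i where p: "p = (x,y)" "i \<in> D" "x \<in> ends i" "y \<in> ends i" unfolding adjI_def by blast
      show "p \<in> (adjI (D - {e}) ends)\<^sup>*"
      proof (cases "i = e")
        case False
        then have "(x,y) \<in> adjI (D - {e}) ends" using p adjI_def by auto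
        then show ?thesis using p by auto
      next
        case True
        then have "x \<in> {f1,f2}" "y \<in> {f1,f2}" using p f12 by auto
        then have "(x,y) \<in> (adjI (Y - {e}) ends)\<^sup>*" using hs1 hs2 by auto
        then show ?thesis using p mono by blast
      qed
    qed
    have "connI F (D - {e}) ends"
      using D(2) rtrancl_subset_rtrancl[OF sub] unfolding connI_def by blast
    moreover have "D - {e} \<subseteq> E - X" using D by auto
    ultimately have "card D \<le> card (D - {e})" using Dmin by blast
    moreover have "card (D - {e}) < card D"
    proof -
      have "e \<in> D" using YD eY by blast
      then show ?thesis by (rule card_Diff1_less[OF finD])
    qed
    ultimately show False by simp
  qed
  have finF: "finite F" using facts(3) .
  have c1: "card F \<le> card D + 1"
  proof (rule conn_card[OF finF finD _ D(2)])
    fix i assume "i \<in> D"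
    then have "i \<in> E" using D by blast
    then have "card (ends i) = 2" using facts(6) unfolding ends_def by blast
    moreover have "finite (ends i)" using finF unfolding ends_def by simp
    ultimately show "finite (ends i) \<and> card (ends i) \<le> 2" by simp
  qed
  define R2 where "R2 = adjI (K - {{a,b}}) (\<lambda>e. e)"
  have ne: "{a,c} \<noteq> {a,b}" "{b,c} \<noteq> {a,b}" using abc by (auto simp: doubleton_eq_iff)
  have ac: "{a,c} \<in> K - {{a,b}}" "{b,c} \<in> K - {{a,b}}" using XK X_def ne by auto
  have st: "(a,c) \<in> R2" "(c,a) \<in> R2" "(b,c) \<in> R2" "(c,b) \<in> R2"
    unfolding R2_def
    by (rule adjI_intro[OF ac(1)], simp, simp)+ (rule adjI_intro[OF ac(2)], simp, simp)+
  have ab: "(a,b) \<in> R2\<^sup>*" "(b,a) \<in> R2\<^sup>*"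
    using rtrancl_trans[OF r_into_rtrancl[OF st(1)] r_into_rtrancl[OF st(4)]]
      rtrancl_trans[OF r_into_rtrancl[OF st(3)] r_into_rtrancl[OF st(2)]] by auto
  have sub2: "adjI K (\<lambda>e. e) \<subseteq> R2\<^sup>*"
  proof
    fix p assume "p \<in> adjI K (\<lambda>e. e)"
    then obtain x y i where p: "p = (x,y)" "i \<in> K" "x \<in> i" "y \<in> i" unfolding adjI_def by blast
    show "p \<in> R2\<^sup>*"
    proof (cases "i = {a,b}")
      case False
      then have "(x,y) \<in> R2" using p R2_def adjI_def by auto
      then show ?thesis using p by auto
    next
      case True
      then show ?thesis using p ab by auto
    qed
  qed
  have K2: "connI V (K - {{a,b}}) (\<lambda>e. e)"
    using Kconn rtrancl_subset_rtrancl[OF sub2] unfolding connI_def R2_def by blast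
  have finK: "finite K" using K_def finE by simp
  have c2: "card V \<le> card (K - {{a,b}}) + 1"
  proof (rule conn_card[OF facts(1) _ _ K2])
    show "finite (K - {{a,b}})" using finK by simp
    fix i assume "i \<in> K - {{a,b}}"
    then have "card i = 2" using K_def facts(4) by auto
    then show "finite i \<and> card i \<le> 2" by (metis card.infinite zero_neq_numeral order_refl)
  qed
  have abK: "{a,b} \<in> K" using XK X_def by auto
  have c3: "card (K - {{a,b}}) + 1 = card K" using abK finK
  proof -
    have "card K > 0" using abK finK card_gt_0_iff by blast
    then show ?thesis using card_Diff_singleton[OF abK] by simp
  qed
  have c4: "card K + card D = card E" using K_def D finD finE
  proof -
    have DE: "D \<subseteq> E" using D by auto
    have "card K = card E - card D" unfolding K_def using card_Diff_subset[OF finD DE] .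
    moreover have "card D \<le> card E" using card_mono[OF finE DE] .
    ultimately show ?thesis by simp
  qed
  show False using c1 c2 c3 c4 facts(9) by linarith
qed


lemma dual_conn:
  assumes pt: "plane_triangulation V E F fv"
    and T: "T = {a,b,c}" "a \<noteq> b" "b \<noteq> c" "a \<noteq> c"
    and gc: "graph_connected (V - T) (delete_verts E T)"
    and nf: "\<forall>f\<in>F. fv f \<noteq> T"
  shows "connI F (E - {{a,b},{b,c},{a,c}}) (\<lambda>e. {f\<in>F. e \<subseteq> fv f})"
proof -
  define R where "R = adjI (E - {{a,b},{b,c},{a,c}}) (\<lambda>e. {f\<in>F. e \<subseteq> fv f})"
  note facts = pt_facts[OF pt]
  have loc: "(g,h) \<in> R\<^sup>*" if u: "u \<in> V" "u \<notin> T" "g \<in> F" "h \<in> F" "u \<in> fv g" "u \<in> fv h" for u g h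
  proof -
    have "(g,h) \<in> (face_adj_at F fv u)\<^sup>*" using facts(8)[of u g h] u unfolding faces_at_def by blast
    moreover have "face_adj_at F fv u \<subseteq> R"
    proof
      fix p assume "p \<in> face_adj_at F fv u"
      then obtain g' h' y where p: "p = (g',h')" "g' \<in> F" "h' \<in> F" "u \<in> fv g'" "u \<in> fv h'" "y \<noteq> u" "y \<in> fv g'" "y \<in> fv h'"
        unfolding face_adj_at_def faces_at_def by blast
      have tri: "\<forall>s\<in>fv g'. \<forall>w\<in>fv g'. s \<noteq> w \<longrightarrow> {s,w} \<in> E"
        using facts(5)[OF p(2)] unfolding triangles_def by simp
      have "{u,y} \<in> E" using tri p(4) p(7) p(6) by metis
      moreover have "{u,y} \<notin> {{a,b},{b,c},{a,c}}" using u T by auto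
      ultimately have "{u,y} \<in> E - {{a,b},{b,c},{a,c}}" by blast
      moreover have "{u,y} \<subseteq> fv g'" "{u,y} \<subseteq> fv h'" using p by auto
      ultimately have "(g',h') \<in> R" unfolding R_def using p(2,3) by (intro adjI_intro) auto
      then show "p \<in> R" using p by simp
    qed
    ultimately show ?thesis using rtrancl_mono by blast
  qed
  have outside: "\<exists>x\<in>fv f. x \<notin> T" if f: "f \<in> F" for f
  proof (rule ccontr)
    assume "\<not> ?thesis"
    then have sub: "fv f \<subseteq> T" by blast
    have "card (fv f) = 3" using facts(5)[OF f] unfolding triangles_def by blast
    moreover have "card T = 3" using T by simp
    moreover have "finite T" using T by simp
    ultimately have "fv f = T" using sub card_subset_eq by metis
    then show False using nf f by blast
  qed
  have all: "(f,g) \<in> R\<^sup>*" if f: "f \<in> F" and g: "g \<in> F" for f g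
  proof -
    obtain x where x: "x \<in> fv f" "x \<notin> T" using outside f by blast
    obtain y where y: "y \<in> fv g" "y \<notin> T" using outside g by blast
    have xV: "x \<in> V" "y \<in> V" using facts(5)[OF f] facts(5)[OF g] x y unfolding triangles_def by blast+
    have "(x,y) \<in> (adj_rel (delete_verts E T))\<^sup>*" using gc xV x y unfolding graph_connected_def by blast
    then have "\<forall>h\<in>F. y \<in> fv h \<longrightarrow> (f,h) \<in> R\<^sup>*"
    proof (induction rule: rtrancl_induct)
      case base then show ?case using loc x xV f by blast
    next
      case (step z w)
      have zw: "{z,w} \<in> E" "{z,w} \<inter> T = {}" using step(2) unfolding adj_rel_def delete_verts_def by auto
      have "card {k\<in>F. {z,w} \<subseteq> fv k} = 2" using facts(6)[OF zw(1)] .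
      then have "{k\<in>F. {z,w} \<subseteq> fv k} \<noteq> {}" by (metis card.empty zero_neq_numeral)
      then obtain k where k: "k \<in> F" "{z,w} \<subseteq> fv k" by blast
      have zV: "z \<in> V" "w \<in> V" using facts(4)[OF zw(1)] by auto
      show ?case
      proof (intro ballI impI)
        fix h assume h: "h \<in> F" "w \<in> fv h"
        have "(f,k) \<in> R\<^sup>*" using step.IH k by auto
        moreover have "(k,h) \<in> R\<^sup>*" using loc[of w k h] zV zw k h by auto
        ultimately show "(f,h) \<in> R\<^sup>*" by (rule rtrancl_trans)
      qed
    qed
    then show "(f,g) \<in> R\<^sup>*" using g y by blast
  qed
  show ?thesis unfolding connI_def R_def[symmetric] using all by blast
qed

lemma all_facial:
  assumes pt: "plane_triangulation V E F fv"
    and ns: "\<not> (\<exists>T. separating_triangle V E T)"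
    and t: "T \<in> triangles V E"
  shows "\<exists>f\<in>F. fv f = T"
proof (rule ccontr)
  assume nf: "\<not> ?thesis"
  have "card T = 3" using t triangles_def by auto
  then obtain a b c where T: "T = {a,b,c}" "a\<noteq>b" "b\<noteq>c" "a\<noteq>c" by (auto simp: card_3_iff)
  have gc: "graph_connected (V - T) (delete_verts E T)" using ns t separating_triangle_def by blast
  have tri: "\<forall>s\<in>T. \<forall>w\<in>T. s \<noteq> w \<longrightarrow> {s,w} \<in> E"
    using t unfolding triangles_def by simp
  have E3: "{a,b} \<in> E" "{b,c} \<in> E" "{a,c} \<in> E" using tri T by simp_all
  show False using no_nonsep_cycle[OF pt T(2-4) E3 dual_conn[OF pt T gc]] nf by auto
qed


lemma stack_tri:
  fixes V :: "'a set" and E :: "'a set set" and F :: "'f set" and fv :: "'f \<Rightarrow> 'a set"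
  assumes pt: "plane_triangulation V E F fv"
    and ns: "\<not> (\<exists>T. separating_triangle V E T)"
    and t: "T \<in> triangles (stack_verts V F) (stack_edges E F fv)"
  shows "\<exists>f\<in>F. T \<subseteq> insert (Inr f) (Inl ` fv f)"
proof -
  have Tsub: "T \<subseteq> Inl ` V \<union> Inr ` F" and cT: "card T = 3"
    and adj: "\<forall>u\<in>T. \<forall>w\<in>T. u \<noteq> w \<longrightarrow> {u,w} \<in> stack_edges E F fv"
    using t unfolding triangles_def stack_verts_def by auto
  show ?thesis
  proof (cases "\<exists>f. Inr f \<in> T")
    case True
    then obtain f where fT: "Inr f \<in> T" by blast
    then have fF: "f \<in> F" using Tsub by auto
    have "T \<subseteq> insert (Inr f) (Inl ` fv f)"
    proof
      fix z assume zT: "z \<in> T"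
      show "z \<in> insert (Inr f) (Inl ` fv f)"
      proof (cases "z = Inr f")
        case True then show ?thesis by simp
      next
        case False
        then have ed: "{z, Inr f} \<in> stack_edges E F fv" using adj zT fT by blast
        show ?thesis
        proof (cases "{z, Inr f} \<in> (\<lambda>e. Inl ` e) ` E")
          case True
          then obtain e where "{z, Inr f} = Inl ` e" by blast
          then have "Inr f \<in> Inl ` e" by (metis insertI1 insert_commute)
          then show ?thesis by auto
        next
          case False
          then obtain x g where xg: "{z, Inr f} = {Inl x, Inr g}" "g \<in> F" "x \<in> fv g"
            using ed unfolding stack_edges_def by blast
          then have "Inr f \<in> {Inl x, Inr g}" by (metis insertI1 insert_commute)
          then have "g = f" by auto
          moreover have "z \<in> {Inl x, Inr g}" using xg(1) by (metis insertI1)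
          ultimately have "z = Inl x" using \<open>z \<noteq> Inr f\<close> by auto
          then show ?thesis using xg \<open>g = f\<close> by auto
        qed
      qed
    qed
    then show ?thesis using fF by blast
  next
    case False
    define T' where "T' = Inl -` T"
    have TT': "T = Inl ` T'"
    proof
      show "T \<subseteq> Inl ` T'"
      proof
        fix z assume z: "z \<in> T"
        show "z \<in> Inl ` T'"
        proof (cases z)
          case (Inl x) then show ?thesis using z T'_def by auto
        next
          case (Inr g) then show ?thesis using z False by auto
        qed
      qed
    qed (auto simp: T'_def)
    have cT': "card T' = 3" using cT TT' by (simp add: card_image)
    have T'V: "T' \<subseteq> V" using Tsub TT' by auto
    have adj': "{x,y} \<in> E" if "x \<in> T'" "y \<in> T'" "x \<noteq> y" for x y
    proof -
      have ed: "{Inl x, Inl y} \<in> stack_edges E F fv" using adj that TT' by auto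
      show ?thesis
      proof (cases "{Inl x, Inl y} \<in> ((\<lambda>e. Inl ` e) ` E :: ('a + 'f) set set)")
        case True
        then obtain e where e: "e \<in> E" "{Inl x, Inl y} = (Inl ` e :: ('a + 'f) set)" by blast
        have "(Inl ` {x,y} :: ('a + 'f) set) = Inl ` e" using e by simp
        then have "{x,y} = e" using inj_image_eq_iff[OF inj_Inl] by metis
        then show ?thesis using e by simp
      next
        case False
        then obtain x' g where xg: "{Inl x, Inl y} = {Inl x', Inr g :: 'a + 'f}"
          using ed unfolding stack_edges_def by blast
        then have "Inr g \<in> {Inl x, Inl y}" by (metis insertI1 insert_commute)
        then show ?thesis by auto
      qed
    qed
    have "T' \<in> triangles V E" unfolding triangles_def using cT' T'V adj' by auto
    then obtain f where f: "f \<in> F" "fv f = T'" using all_facial[OF pt ns] by blast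
    then show ?thesis using TT' by blast
  qed
qed

lemma face_count:
  assumes pt: "plane_triangulation V E F fv"
  shows "3 * card F = 2 * card E"
proof -
  note facts = pt_facts[OF pt]
  have sg: "simple_graph V E" using pt plane_triangulation_def by blast
  have "(\<Sum>f\<in>F. card {e\<in>E. e \<subseteq> fv f}) = (\<Sum>e\<in>E. card {f\<in>F. e \<subseteq> fv f})"
    by (rule double_count[OF facts(3) facts(2)])
  moreover have "(\<Sum>f\<in>F. card {e\<in>E. e \<subseteq> fv f}) = (\<Sum>f\<in>F. 3)"
  proof (rule sum.cong[OF refl])
    fix f assume f: "f \<in> F"
    obtain p q r where pqr: "fv f = {p,q,r}" "p \<noteq> q" "q \<noteq> r" "p \<noteq> r"
      "{e\<in>E. e \<subseteq> fv f} = {{p,q},{q,r},{p,r}}"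
      using tri_edges[OF sg facts(5)[OF f]] by blast
    have d: "{p,q} \<noteq> {q,r}" "{p,q} \<noteq> {p,r}" "{q,r} \<noteq> {p,r}" using pqr by (auto simp: doubleton_eq_iff)
    show "card {e\<in>E. e \<subseteq> fv f} = 3" unfolding pqr(5) using d by simp
  qed
  moreover have "(\<Sum>e\<in>E. card {f\<in>F. e \<subseteq> fv f}) = (\<Sum>e\<in>E. 2)"
    using facts(6) by (rule sum.cong[OF refl])
  ultimately show ?thesis by simp
qed

theorem lemma4p6:
  fixes V :: "'a set" and E :: "'a set set" and F :: "'f set" and fv :: "'f \<Rightarrow> 'a set"
  assumes "plane_triangulation V E F fv"
    and "\<not> (\<exists>T. separating_triangle V E T)"
  shows "int (nu (stack_verts V F) (stack_edges E F fv)) \<le> 2 * int (card V) - 4"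
proof -
  note facts = pt_facts[OF assms(1)]
  define Q where "Q = (\<lambda>T f. f \<in> F \<and> T \<subseteq> insert (Inr f) (Inl ` fv f))"
  have bound: "card S \<le> card F" if S: "edge_disjoint_triangles (stack_verts V F) (stack_edges E F fv) S" for S
  proof -
    have ex: "\<exists>f. Q T f" if "T \<in> S" for T
    proof -
      have "T \<in> triangles (stack_verts V F) (stack_edges E F fv)"
        using S that unfolding edge_disjoint_triangles_def by (meson subsetD)
      then obtain f where "f \<in> F" "T \<subseteq> insert (Inr f) (Inl ` fv f)" using stack_tri[OF assms] by blast
      then show ?thesis unfolding Q_def by blast
    qed
    define phi where "phi T = (SOME f. Q T f)" for T
    have phi: "Q T (phi T)" if "T \<in> S" for T
      unfolding phi_def using ex[OF that] by (rule someI_ex)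
    have c3: "card T = 3" if "T \<in> S" for T
      using S that unfolding edge_disjoint_triangles_def triangles_def by blast
    have inj: "inj_on phi S"
    proof (rule inj_onI, rule ccontr)
      fix T1 T2 assume T1: "T1 \<in> S" and T2: "T2 \<in> S" and eq: "phi T1 = phi T2" and ne: "T1 \<noteq> T2"
      define f where "f = phi T1"
      have s1: "T1 \<subseteq> insert (Inr f) (Inl ` fv f)" and fF: "f \<in> F" using phi[OF T1] f_def Q_def by auto
      have s2: "T2 \<subseteq> insert (Inr f) (Inl ` fv f)" using phi[OF T2] eq f_def Q_def by auto
      have c3f: "card (fv f) = 3" using facts(5)[OF fF] unfolding triangles_def by blast
      then have fin: "finite (fv f)" by (metis card.infinite zero_neq_numeral)
      have ci: "card (Inl ` fv f :: ('a + 'f) set) \<le> 3" using card_image_le[OF fin, of Inl] c3f by simp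
      have finU: "finite (insert (Inr f) (Inl ` fv f) :: ('a + 'f) set)" using fin by simp
      have cU: "card (insert (Inr f) (Inl ` fv f) :: ('a + 'f) set) \<le> 4"
        using ci fin card_insert_le_m1 by (simp add: card_insert_if)
      have "card (T1 \<union> T2) \<le> card (insert (Inr f) (Inl ` fv f) :: ('a + 'f) set)"
        using s1 s2 by (intro card_mono[OF finU]) blast
      then have "card (T1 \<union> T2) \<le> 4" using cU by linarith
      moreover have "card (T1 \<inter> T2) \<le> 1" using S T1 T2 ne unfolding edge_disjoint_triangles_def by blast
      moreover have "card T1 + card T2 = card (T1 \<union> T2) + card (T1 \<inter> T2)"
        using card_Un_Int finite_subset[OF s1 finU] finite_subset[OF s2 finU] by blast
      ultimately show False using c3[OF T1] c3[OF T2] by simp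
    qed
    have "phi ` S \<subseteq> F" using phi Q_def by auto
    then show ?thesis using card_inj_on_le[OF inj _ facts(3)] by simp
  qed
  define M where "M = {card S | S. edge_disjoint_triangles (stack_verts V F) (stack_edges E F fv) S}"
  have "M \<subseteq> {..card F}" using bound M_def by auto
  then have finM: "finite M" using finite_subset by blast
  have "edge_disjoint_triangles (stack_verts V F) (stack_edges E F fv) {}"
    unfolding edge_disjoint_triangles_def by simp
  then have "M \<noteq> {}" unfolding M_def by blast
  then have "Max M \<le> card F" using finM bound M_def by (intro Max.boundedI) auto
  then have nuF: "nu (stack_verts V F) (stack_edges E F fv) \<le> card F" unfolding nu_def M_def .
  have fc: "3 * card F = 2 * card E" by (rule face_count[OF assms(1)])
  then have fc': "3 * int (card F) = 2 * int (card E)" by linarith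
  show ?thesis using nuF fc' facts(9) by linarith
qed

end
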